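(* Let $N\ge2$, $\sigma\in S_N$, and write $\sigma=T_{a_n}\cdots T_{a_1}$ as a product of simple transpositions. Let $\mathbf{A}_\sigma=\mathbf{T}_{a_n}\cdots\mathbf{T}_{a_1}$ be the associated $2^N\times 2^N$ matrix. Then for each $k=0,1,\dots,N$, \[ [\mathbf{A}_\sigma]_{h_k,h_k}=\operatorname{sgn}(\sigma)\prod_{j=1}^{k}\Big(\frac{1-\xi_j}{1-\xi_{\sigma(j)}}\Big)^{j-1}\prod_{j=k+1}^{N}\Big(\frac{1-\xi_j}{1-\xi_{\sigma(j)}}\Big)^{j-2}. \]
   Context: $\xi_1,\dots,\xi_N$ are complex variables different from $1$. For $l=1,\dots,N-1$, $T_l$ acts on $\sigma\in S_N$ (viewed as the word $(\sigma(1)\cdots\sigma(N))$) by $(T_l\sigma)(l)=\sigma(l+1)$, $(T_l\sigma)(l+1)=\sigma(l)$, $(T_l\sigma)(j)=\sigma(j)$ otherwise. $\mathbf{S}_{\beta\alpha}$ is the $4\times4$ matrix with rows $\big(-\tfrac{1-\xi_\beta}{1-\xi_\alpha},0,0,0\big)$, $\big(0,-\tfrac{1-\xi_\beta}{1-\xi_\alpha},\tfrac{\xi_\beta-\xi_\alpha}{1-\xi_\alpha},0\big)$, $(0,0,-1,0)$, $\big(0,0,0,-\tfrac{1-\xi_\beta}{1-\xi_\alpha}\big)$, and $\mathbf{T}_l(\alpha,\beta)=\mathbf{I}_2^{\otimes(l-1)}\otimes\mathbf{S}_{\beta\alpha}\otimes\mathbf{I}_2^{\otimes(N-l-1)}$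 (Kronecker products). In the product $\mathbf{A}_\sigma=\mathbf{T}_{a_n}\cdots\mathbf{T}_{a_1}$, the factor $\mathbf{T}_{a_i}$ means $\mathbf{T}_{a_i}(\alpha,\beta)$ where, with $\sigma_{i-1}=T_{a_{i-1}}\cdots T_{a_1}$ ($\sigma_0$ the identity), $\alpha=\sigma_{i-1}(a_i)$ and $\beta=\sigma_{i-1}(a_i+1)$ (i.e., $T_{a_i}$ turns the word $(\cdots\alpha\beta\cdots)$ into $(\cdots\beta\alpha\cdots)$). (The matrix $\mathbf{A}_\sigma$ is independent of the chosen decomposition.) $h_k=2^{N-1}+\dots+2^{N-k}+1$ for $1\le k\le N$, $h_0=1$. *)

theory Defs
  imports Complex_Main "HOL-Combinatorics.Permutations"
begin

text \<open>Square matrices are represented as functions nat => nat => complex with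
0-based indices; the dimension is carried explicitly where needed.\<close>

type_synonym cmat = "nat \<Rightarrow> nat \<Rightarrow> complex"

definition mmult :: "nat \<Rightarrow> cmat \<Rightarrow> cmat \<Rightarrow> cmat" where
  "mmult d A B = (\<lambda>i j. \<Sum>l<d. A i l * B l j)"

definition idm :: cmat where
  "idm = (\<lambda>i j. if i = j then 1 else 0)"

definition kron :: "nat \<Rightarrow> cmat \<Rightarrow> cmat \<Rightarrow> cmat" where
  "kron d A B = (\<lambda>i j. A (i div d) (j div d) * B (i mod d) (j mod d))"

definition I2 :: cmat where
  "I2 = (\<lambda>i j. if i = j \<and> i < 2 then 1 else 0)"

fun kpow :: "nat \<Rightarrow> cmat" where
  "kpow 0 = (\<lambda>i j. if i = 0 \<and> j = 0 then 1 else 0)"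
| "kpow (Suc m) = kron 2 (kpow m) I2"

definition Smat :: "complex \<Rightarrow> complex \<Rightarrow> cmat" where
  "Smat xb xa = (\<lambda>i j.
     if i = 0 \<and> j = 0 then - (1 - xb) / (1 - xa)
     else if i = 1 \<and> j = 1 then - (1 - xb) / (1 - xa)
     else if i = 1 \<and> j = 2 then (xb - xa) / (1 - xa)
     else if i = 2 \<and> j = 2 then -1
     else if i = 3 \<and> j = 3 then - (1 - xb) / (1 - xa)
     else 0)"

definition Tmat :: "nat \<Rightarrow> (nat \<Rightarrow> complex) \<Rightarrow> nat \<Rightarrow> nat \<Rightarrow> nat \<Rightarrow> cmat" where
  "Tmat N \<xi> l \<alpha> \<beta> =
     kron (2 ^ (N - l - 1)) (kron 4 (kpow (l - 1)) (Smat (\<xi> \<beta>) (\<xi> \<alpha>))) (kpow (N - l - 1))"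

definition swapw :: "nat \<Rightarrow> (nat \<Rightarrow> nat) \<Rightarrow> (nat \<Rightarrow> nat)" where
  "swapw l w = (\<lambda>j. if j = l then w (l + 1) else if j = l + 1 then w l else w j)"

fun wordof :: "(nat \<Rightarrow> nat) \<Rightarrow> nat list \<Rightarrow> (nat \<Rightarrow> nat)" where
  "wordof w [] = w"
| "wordof w (a # as) = wordof (swapw a w) as"

text \<open>The product T_{a_n} ... T_{a_1} with the factors labelled along the way,
starting from the current word w.\<close>
fun Aw :: "nat \<Rightarrow> (nat \<Rightarrow> complex) \<Rightarrow> (nat \<Rightarrow> nat) \<Rightarrow> nat list \<Rightarrow> cmat" where
  "Aw N \<xi> w [] = idm"
| "Aw N \<xi> w (a # as) = mmult (2 ^ N) (Aw N \<xi> (swapw a w) as) (Tmat N \<xi> a (w a) (w (a + 1)))"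

definition Amat :: "nat \<Rightarrow> (nat \<Rightarrow> complex) \<Rightarrow> nat list \<Rightarrow> cmat" where
  "Amat N \<xi> as = Aw N \<xi> id as"

text \<open>h_k = 2^{N-1} + ... + 2^{N-k} + 1 (a 1-based index), h_0 = 1.\<close>
definition hidx :: "nat \<Rightarrow> nat \<Rightarrow> nat" where
  "hidx N k = (\<Sum>i=1..k. 2 ^ (N - i)) + 1"

end

theory Submission
  imports Defs
begin

definition ut :: "cmat \<Rightarrow> bool" where
  "ut M \<longleftrightarrow> (\<forall>i j. j < i \<longrightarrow> M i j = 0)"

lemma ut_kron:
  assumes "ut A" "ut B" "d > 0"
  shows "ut (kron d A B)"
  unfolding ut_def kron_def
proof (intro allI impI)
  fix i j :: nat assume ji: "j < i"
  show "A (i div d) (j div d) * B (i mod d) (j mod d) = 0"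
  proof (cases "i div d = j div d")
    case True
    have "d * (j div d) + i mod d = i" using True by (metis div_mult_mod_eq mult.commute)
    moreover have "d * (j div d) + j mod d = j" by simp
    ultimately have "j mod d < i mod d" using ji by linarith
    then show ?thesis using assms(2) unfolding ut_def by simp
  next
    case False
    have "j div d \<le> i div d" using ji by (simp add: div_le_mono)
    with False have "j div d < i div d" by simp
    then show ?thesis using assms(1) unfolding ut_def by simp
  qed
qed

lemma ut_I2: "ut I2" unfolding ut_def I2_def by simp

lemma ut_kpow: "ut (kpow m)"
  by (induction m) (auto simp: ut_I2 intro!: ut_kron, auto simp: ut_def)

lemma ut_Smat: "ut (Smat a b)" unfolding ut_def Smat_def by auto

lemma ut_Tmat: "ut (Tmat N \<xi> l a b)"
  unfolding Tmat_def by (intro ut_kron ut_kpow ut_Smat) auto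

lemma ut_idm: "ut idm" unfolding ut_def idm_def by auto

lemma ut_mmult: assumes "ut A" "ut B" shows "ut (mmult d A B)"
  unfolding ut_def mmult_def
proof (intro allI impI sum.neutral ballI)
  fix i j :: nat and l assume "j < i"
  show "A i l * B l j = 0"
  proof (cases "l < i")
    case True then show ?thesis using assms(1) by (simp add: ut_def)
  next
    case False then have "j < l" using \<open>j < i\<close> by simp
    then show ?thesis using assms(2) by (simp add: ut_def)
  qed
qed

lemma diag_mmult: assumes "ut A" "ut B" "h < d"
  shows "mmult d A B h h = A h h * B h h"
proof -
  have "mmult d A B h h = (\<Sum>l\<in>{..<d}. A h l * B l h)" by (simp add: mmult_def)
  also have "\<dots> = A h h * B h h + (\<Sum>l\<in>{..<d} - {h}. A h l * B l h)"
    using assms(3) by (subst sum.remove[of _ h]) auto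
  also have "(\<Sum>l\<in>{..<d} - {h}. A h l * B l h) = 0"
  proof (rule sum.neutral, rule ballI)
    fix l assume "l \<in> {..<d} - {h}"
    then have "l < h \<or> h < l" by auto
    then show "A h l * B l h = 0" using assms(1,2) by (auto simp: ut_def)
  qed
  finally show ?thesis by simp
qed

lemma ut_Aw: "ut (Aw N \<xi> w as)"
  by (induction as arbitrary: w) (auto simp: ut_idm ut_Tmat intro!: ut_mmult)

lemma kpow_diag: "kpow m i i = (if i < 2 ^ m then 1 else 0)"
proof (induction m arbitrary: i)
  case 0 then show ?case by simp
next
  case (Suc m)
  have "(i div 2 < 2 ^ m) = (i < 2 ^ Suc m)" by auto
  then show ?case using Suc by (simp add: kron_def I2_def)
qed

lemma swapw_eq: "swapw a w = w \<circ> Transposition.transpose a (a + 1)"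
  by (auto simp: swapw_def fun_eq_iff transpose_def)

lemma sign_wordof: "permutation w \<Longrightarrow> sign (wordof w as) = (-1) ^ length as * sign w"
proof (induction as arbitrary: w)
  case Nil then show ?case by simp
next
  case (Cons a as)
  have p: "permutation (swapw a w)" unfolding swapw_eq
    using Cons.prems by (intro permutation_compose permutation_swap_id)
  have "sign (swapw a w) = - sign w" unfolding swapw_eq
    using Cons.prems by (simp add: sign_compose permutation_swap_id sign_swap_id)
  then show ?case using Cons.IH[OF p] by simp
qed


lemma hidx_eq: "k \<le> N \<Longrightarrow> hidx N k - 1 = (2^k - 1) * 2^(N-k)"
proof (induction k)
  case 0 then show ?case by (simp add: hidx_def)
next
  case (Suc k)
  then have IH: "(\<Sum>i=1..k. 2 ^ (N - i)) = (2^k - 1) * (2::nat)^(N-k)" by (simp add: hidx_def)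
  obtain p where p: "N - k = Suc p" using Suc.prems by (metis Suc_diff_le diff_Suc_Suc le_SucE less_eq_Suc_le not_less_eq_eq) 
  have Np: "N - Suc k = p" using p by simp
  have "(\<Sum>i=1..Suc k. (2::nat) ^ (N - i)) = (2^k - 1) * 2^(N-k) + 2^p" using IH Np by simp
  also have "\<dots> = (2^k - 1) * 2 * 2^p + 2^p" using p by simp
  also have "\<dots> = (2^Suc k - 1) * 2^p"
  proof -
    have "(1::nat) \<le> 2^k" by simp
    then obtain t where "2^k = t + (1::nat)" by (metis le_add_diff_inverse2)
    then show ?thesis by (simp add: algebra_simps)
  qed
  finally show ?case using Np by (simp add: hidx_def)
qed

lemma H_lt: "k \<le> N \<Longrightarrow> (2^k - 1) * 2^(N-k) < (2::nat)^N"
proof -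
  assume "k \<le> N"
  have "(2^k - 1) * 2^(N-k) < (2::nat)^k * 2^(N-k)" by simp
  also have "\<dots> = 2^N" using \<open>k \<le> N\<close> by (simp flip: power_add)
  finally show ?thesis .
qed

lemma q_mod4:
  assumes "1 \<le> l" "l < N" "k \<le> N"
  shows "((2^k - 1) * 2^(N-k) div 2^(N-l-1)) mod 4 = (if l + 1 \<le> k then 3 else if l = k then 2 else (0::nat))"
proof -
  consider "l + 1 \<le> k" | "l = k" | "k < l" by linarith
  then show ?thesis
  proof cases
    case 1
    define j where "j = k - l - 1"
    have e1: "N - k + j = N - l - 1" using 1 assms j_def by simp
    have e2: "k = (l+1) + j" using 1 j_def by simp
    have "((2::nat)^k - 1) * 2^(N-k) div 2^(N-l-1) = ((2^k - 1) * 2^(N-k)) div (2^(N-k) * 2^j)"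
      by (simp only: e1[symmetric] power_add)
    also have "\<dots> = (2^k - 1) div 2^j" by (simp add: div_mult2_eq)
    moreover have A: "2^k - 1 = 2^j * (2^(l+1) - 1) + (2^j - (1::nat))"
    proof -
      have g: "x * y - 1 = x * (y - 1) + (x - 1)" if "(1::nat) \<le> x" "1 \<le> y" for x y
        using that by (cases x; cases y) (auto simp: algebra_simps)
      have "(2::nat)^k = 2^j * 2^(l+1)" unfolding e2 by (simp only: power_add mult.commute)
      then show ?thesis using g[of "2^j" "2^(l+1)"] by simp
    qed
    moreover have B: "(2^j * (2^(l+1) - 1) + (2^j - (1::nat))) div 2^j = 2^(l+1) - 1"
    proof -
      have dd: "(c * q + r) div c = q" if "(r::nat) < c" for c q r
        using that by (metis add.commute div_mult_self2 div_less gr_implies_not0 add_0)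
      show ?thesis by (rule dd) simp
    qed
    moreover have C: "(2^(l+1) - 1) mod 4 = (3::nat)"
    proof -
      obtain r where r: "l = Suc r" using assms(1) by (cases l) auto
      have "(2::nat)^(l+1) - 1 = 4 * (2^r - 1) + 3"
      proof -
        have "(1::nat) \<le> 2^r" by simp
        then show ?thesis using r by (simp add: algebra_simps diff_mult_distrib2)
      qed
      then show ?thesis by simp
    qed
    ultimately show ?thesis using 1 by (simp only:) simp
  next
    case 2
    have e: "N - k = Suc (N - l - 1)" using 2 assms by simp
    have "(2^k - 1) * 2^(N-k) div 2^(N-l-1) = (2^k - 1) * (2::nat)"
      unfolding e by simp
    moreover have "((2::nat)^k - 1) mod 2 = 1"
    proof -
      have o: "odd ((2::nat)^k - 1)" using 2 assms by simp
      then show ?thesis by (simp only: odd_iff_mod_2_eq_one)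
    qed
    moreover have "((2^k - 1) * 2) mod 4 = ((2^k - 1) mod 2) * (2::nat)"
      using mod_mult_mult2[of "(2::nat)^k-1" 2 2] by simp
    ultimately show ?thesis using 2 by (simp add: odd_iff_mod_2_eq_one)
  next
    case 3
    define j where "j = l - 1 - k"
    have e: "N - k = (N - l - 1) + (j + 2)" using 3 assms j_def by simp
    have "(2^k - 1) * 2^(N-k) div 2^(N-l-1) = (2^k - 1) * 2^j * (4::nat)"
      unfolding e power_add by simp
    then show ?thesis using 3 by simp
  qed
qed


lemma Tmat_diag:
  assumes "1 \<le> l" "l < N" "k \<le> N"
  shows "Tmat N \<xi> l \<alpha> \<beta> ((2^k-1)*2^(N-k)) ((2^k-1)*2^(N-k)) =
    (if l = k then -1 else - (1 - \<xi> \<beta>) / (1 - \<xi> \<alpha>))"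
proof -
  define H :: nat where "H = (2^k-1)*2^(N-k)"
  define d :: nat where "d = 2^(N-l-1)"
  define q where "q = H div d"
  have dpos: "d > 0" by (simp add: d_def)
  have "H < 2^N" unfolding H_def using H_lt assms(3) .
  also have "(2::nat)^N = 2^(l+1) * d"
  proof -
    have eN: "N = (l+1) + (N-l-1)" using assms by simp
    show ?thesis unfolding d_def by (metis power_add eN)
  qed
  finally have "q < 2^(l+1)" unfolding q_def using dpos by (simp add: div_less_iff_less_mult)
  also have "(2::nat)^(l+1) = 4 * 2^(l-1)"
  proof -
    obtain r where "l = Suc r" using assms(1) by (cases l) auto
    then show ?thesis by simp
  qed
  finally have qd: "q div 4 < 2^(l-1)" by simp
  have m4: "q mod 4 = (if l + 1 \<le> k then 3 else if l = k then 2 else 0)"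
    unfolding q_def H_def d_def using q_mod4[OF assms] .
  have "Tmat N \<xi> l \<alpha> \<beta> H H = kpow (l-1) (q div 4) (q div 4) * Smat (\<xi> \<beta>) (\<xi> \<alpha>) (q mod 4) (q mod 4)
      * kpow (N-l-1) (H mod d) (H mod d)"
    unfolding Tmat_def kron_def q_def d_def by simp
  also have "\<dots> = Smat (\<xi> \<beta>) (\<xi> \<alpha>) (q mod 4) (q mod 4)"
    using qd dpos by (simp add: kpow_diag d_def)
  also have "\<dots> = (if l = k then -1 else - (1 - \<xi> \<beta>) / (1 - \<xi> \<alpha>))"
    unfolding m4 Smat_def by auto
  finally show ?thesis unfolding H_def .
qed


definition ee :: "nat \<Rightarrow> nat \<Rightarrow> int" where
  "ee k j = (if j \<le> k then int j - 1 else int j - 2)"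

definition QQ :: "nat \<Rightarrow> (nat \<Rightarrow> complex) \<Rightarrow> nat \<Rightarrow> (nat \<Rightarrow> nat) \<Rightarrow> complex" where
  "QQ N \<xi> k w = (\<Prod>j\<in>{1..N}. (1 - \<xi> (w j)) powi ee k j)"

lemma QQ_swap:
  assumes xi: "\<forall>j\<in>{1..N}. \<xi> j \<noteq> 1" and w: "w ` {1..N} \<subseteq> {1..N}" and a: "a \<in> {1..N-1}"
  shows "(if a = k then 1 else (1 - \<xi> (w (a+1))) / (1 - \<xi> (w a))) * QQ N \<xi> k (swapw a w) = QQ N \<xi> k w"
proof -
  define S where "S = {1..N}"
  define f where "f = (\<lambda>v j. (1 - \<xi> (v j)) powi ee k j)"
  have aS: "a \<in> S" "a + 1 \<in> S - {a}" using a by (auto simp: S_def)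
  have split: "QQ N \<xi> k v = f v a * f v (a+1) * (\<Prod>j\<in>S - {a} - {a+1}. f v j)" for v
  proof -
    have "QQ N \<xi> k v = prod (f v) S" unfolding QQ_def f_def S_def by simp
    also have "\<dots> = f v a * prod (f v) (S - {a})" using aS by (intro prod.remove) (auto simp: S_def)
    also have "prod (f v) (S - {a}) = f v (a+1) * prod (f v) (S - {a} - {a+1})"
      using aS by (intro prod.remove) (auto simp: S_def)
    finally show ?thesis by (simp add: mult.assoc)
  qed
  define X where "X = (\<Prod>j\<in>S - {a} - {a+1}. f w j)"
  have X': "(\<Prod>j\<in>S - {a} - {a+1}. f (swapw a w) j) = X"
    unfolding X_def by (rule prod.cong) (auto simp: f_def swapw_def)
  define u where "u = 1 - \<xi> (w a)"
  define v where "v = 1 - \<xi> (w (a+1))"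
  have "w a \<in> {1..N}" "w (a+1) \<in> {1..N}" using w aS by (auto simp: S_def image_subset_iff)
  then have u0: "u \<noteq> 0" and v0: "v \<noteq> 0" using xi by (auto simp: u_def v_def)
  have Qw: "QQ N \<xi> k w = u powi ee k a * v powi ee k (a+1) * X"
    using split[of w] by (simp add: f_def u_def v_def X_def)
  have Qw': "QQ N \<xi> k (swapw a w) = v powi ee k a * u powi ee k (a+1) * X"
    using split[of "swapw a w"] X' by (simp add: f_def u_def v_def swapw_def)
  show ?thesis
  proof (cases "a = k")
    case True
    then have "ee k (a+1) = ee k a" by (simp add: ee_def)
    then show ?thesis using True Qw Qw' by simp
  next
    case False
    then have e: "ee k (a+1) = ee k a + 1" by (auto simp: ee_def)
    have pu: "u powi (ee k a + 1) = u powi ee k a * u" using u0 by (simp add: power_int_add_1)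
    have pv: "v powi (ee k a + 1) = v powi ee k a * v" using v0 by (simp add: power_int_add_1)
    have Q1: "QQ N \<xi> k w = u powi ee k a * (v powi ee k a * v) * X" using Qw unfolding e pv .
    have Q2: "QQ N \<xi> k (swapw a w) = v powi ee k a * (u powi ee k a * u) * X" using Qw' unfolding e pu .
    have "(v / u) * QQ N \<xi> k (swapw a w) = QQ N \<xi> k w"
      unfolding Q1 Q2 using u0 by (simp add: field_simps)
    then show ?thesis using False by (simp add: u_def v_def)
  qed
qed

lemma main:
  assumes xi: "\<forall>j\<in>{1..N}. \<xi> j \<noteq> 1" and kN: "k \<le> N"
  shows "w ` {1..N} \<subseteq> {1..N} \<Longrightarrow> set as \<subseteq> {1..N-1} \<Longrightarrow>
    Aw N \<xi> w as ((2^k-1)*2^(N-k)) ((2^k-1)*2^(N-k)) * QQ N \<xi> k (wordof w as) = (-1)^length as * QQ N \<xi> k w"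
proof (induction as arbitrary: w)
  case Nil then show ?case by (simp add: idm_def)
next
  case (Cons a as)
  define H :: nat where "H = (2^k-1)*2^(N-k)"
  define w' where "w' = swapw a w"
  have a: "a \<in> {1..N-1}" using Cons.prems by auto
  have w': "w' ` {1..N} \<subseteq> {1..N}" using Cons.prems(1) a
    by (auto simp: w'_def swapw_def image_subset_iff)
  have IH: "Aw N \<xi> w' as H H * QQ N \<xi> k (wordof w' as) = (-1)^length as * QQ N \<xi> k w'"
    using Cons.IH[OF w'] Cons.prems(2) by (simp add: H_def)
  have HN: "H < 2^N" unfolding H_def using H_lt kN .
  have "Aw N \<xi> w (a # as) H H = Aw N \<xi> w' as H H * Tmat N \<xi> a (w a) (w (a + 1)) H H"
    using diag_mmult[OF ut_Aw ut_Tmat HN] by (simp add: w'_def)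
  also have "Tmat N \<xi> a (w a) (w (a + 1)) H H = - (if a = k then 1 else (1 - \<xi> (w (a+1))) / (1 - \<xi> (w a)))"
    unfolding H_def using Tmat_diag[of a N k \<xi> "w a" "w (a+1)"] a kN by (auto simp: minus_divide_left)
  finally have "Aw N \<xi> w (a # as) H H * QQ N \<xi> k (wordof w (a#as)) =
     - ((Aw N \<xi> w' as H H * QQ N \<xi> k (wordof w' as)) * (if a = k then 1 else (1 - \<xi> (w (a+1))) / (1 - \<xi> (w a))))"
    by (simp add: w'_def)
  also have "\<dots> = - ((-1)^length as * ((if a = k then 1 else (1 - \<xi> (w (a+1))) / (1 - \<xi> (w a))) * QQ N \<xi> k w'))"
    unfolding IH by simp
  also have "\<dots> = (-1)^length (a#as) * QQ N \<xi> k w"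
    using QQ_swap[OF xi Cons.prems(1) a, of k] by (simp add: w'_def)
  finally show ?case by (simp add: H_def)
qed


theorem lemma2p2:
  fixes N :: nat and \<xi> :: "nat \<Rightarrow> complex" and as :: "nat list"
    and \<sigma> :: "nat \<Rightarrow> nat" and k :: nat
  assumes "N \<ge> 2"
    and "\<forall>j\<in>{1..N}. \<xi> j \<noteq> 1"
    and "\<sigma> permutes {1..N}"
    and "set as \<subseteq> {1..N - 1}"
    and "\<sigma> = wordof id as"
    and "k \<le> N"
  shows "Amat N \<xi> as (hidx N k - 1) (hidx N k - 1) =
    of_int (sign \<sigma>)
    * (\<Prod>j=1..k. ((1 - \<xi> j) / (1 - \<xi> (\<sigma> j))) ^ (j - 1))
    * (\<Prod>j=k+1..N. ((1 - \<xi> j) / (1 - \<xi> (\<sigma> j))) powi (int j - 2))"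
proof -
  define H :: nat where "H = (2^k-1)*2^(N-k)"
  have hH: "hidx N k - 1 = H" unfolding H_def using hidx_eq assms(6) .
  have sS: "\<sigma> ` {1..N} \<subseteq> {1..N}" using permutes_image[OF assms(3)] by simp
  have M: "Aw N \<xi> id as H H * QQ N \<xi> k \<sigma> = (-1)^length as * QQ N \<xi> k id"
    using main[OF assms(2,6), of id as] assms(4,5) by (simp add: H_def)
  have Q0: "QQ N \<xi> k \<sigma> \<noteq> 0"
  proof -
    have "\<forall>j\<in>{1..N}. (1 - \<xi> (\<sigma> j)) powi ee k j \<noteq> 0"
    proof
      fix j assume "j \<in> {1..N}"
      then have "\<sigma> j \<in> {1..N}" using sS by blast
      then have "1 - \<xi> (\<sigma> j) \<noteq> 0" using assms(2) by auto
      then show "(1 - \<xi> (\<sigma> j)) powi ee k j \<noteq> 0" by (simp add: power_int_not_zero)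
    qed
    then show ?thesis unfolding QQ_def by (subst prod_zero_iff) auto
  qed
  have sg: "sign \<sigma> = (-1) ^ length as"
    using sign_wordof[of id as] assms(5) by simp
  have "(\<Prod>j=1..k. ((1 - \<xi> j) / (1 - \<xi> (\<sigma> j))) ^ (j - 1))
      = (\<Prod>j=1..k. ((1 - \<xi> j) / (1 - \<xi> (\<sigma> j))) powi ee k j)"
  proof (rule prod.cong[OF refl])
    fix j assume "j \<in> {1..k}"
    then have "ee k j = int (j - 1)" by (auto simp: ee_def)
    then show "((1 - \<xi> j) / (1 - \<xi> (\<sigma> j))) ^ (j - 1) = ((1 - \<xi> j) / (1 - \<xi> (\<sigma> j))) powi ee k j"
      by simp
  qed
  moreover have "(\<Prod>j=k+1..N. ((1 - \<xi> j) / (1 - \<xi> (\<sigma> j))) powi (int j - 2))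
      = (\<Prod>j=k+1..N. ((1 - \<xi> j) / (1 - \<xi> (\<sigma> j))) powi ee k j)"
    by (rule prod.cong[OF refl]) (auto simp: ee_def)
  moreover have "(\<Prod>j=1..k. ((1 - \<xi> j) / (1 - \<xi> (\<sigma> j))) powi ee k j)
      * (\<Prod>j=k+1..N. ((1 - \<xi> j) / (1 - \<xi> (\<sigma> j))) powi ee k j)
      = (\<Prod>j=1..N. ((1 - \<xi> j) / (1 - \<xi> (\<sigma> j))) powi ee k j)"
  proof -
    have "{1..N} = {1..k} \<union> {k+1..N}" using assms(6) by auto
    then show ?thesis by (simp add: prod.union_disjoint)
  qed
  moreover have "(\<Prod>j=1..N. ((1 - \<xi> j) / (1 - \<xi> (\<sigma> j))) powi ee k j) = QQ N \<xi> k id / QQ N \<xi> k \<sigma>"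
    unfolding QQ_def by (simp add: power_int_divide_distrib prod_dividef)
  ultimately have R: "of_int (sign \<sigma>)
    * (\<Prod>j=1..k. ((1 - \<xi> j) / (1 - \<xi> (\<sigma> j))) ^ (j - 1))
    * (\<Prod>j=k+1..N. ((1 - \<xi> j) / (1 - \<xi> (\<sigma> j))) powi (int j - 2))
    = (-1)^length as * (QQ N \<xi> k id / QQ N \<xi> k \<sigma>)"
    by (simp add: sg mult.assoc)
  have L: "Aw N \<xi> id as H H = (-1)^length as * (QQ N \<xi> k id / QQ N \<xi> k \<sigma>)"
    using M Q0 by (simp add: field_simps)
  show ?thesis unfolding hH Amat_def R L ..
qed

end
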